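(* Suppose that $\mathbf P\big(\min(\eta(X),1-\eta(X))\le\varepsilon\big)>0$ for every $\varepsilon>0$. Then, for any choice of the thresholds $\tau_\gamma$ (as described below), $\lim_{\gamma\to1^-}\tau_\gamma=1$, and $\mathcal R^*:=\lim_{\gamma\to1^-}\mathcal R(\gamma)=0$.
   Context: Setup (binary classification with indecisions). $(\mathcal X,\mathcal U)$ is a measurable space with a $\sigma$-finite measure $\mu$; $P_1\neq P_2$ are probability measures with densities $f_1,f_2$ w.r.t. $\mu$; $p_1,p_2>0$, $p_1+p_2=1$; $\mathbf P(Y=i)=p_i$ and given $Y=i$, $X\sim P_i$. A classifier is a measurable $\tilde Y(X,U)\in\{0,1,2\}$ with $U\sim\mathrm{Unif}[0,1]$ independent of $(X,Y)$; $0$ means indecision. $\eta(x)=\frac{p_1f_1(x)}{p_1f_1(x)+p_2f_2(x)}$. $\mathcal R(\gamma):=\inf\mathbf P(\tilde Y\neq Y\mid\tilde Y\neq0)$ over classifiers with $\mathbf P(\tilde Y=0)=\gamma$; $\gamma\mapsto\mathcal R(\gamma)$ is non-increasing and nonnegative on $[0,1)$. For $\gamma\in[0,1)$, $\tau_\gamma\in[1/2,1]$ denotes a threshold for which there is a classifier $Y^*_\gamma$ with $\mathbf P(Y^*_\gamma=0)=\gamma$, a.s. $\{1-\tau_\gamma<\eta(X)<\tau_\gamma\}\subset\{Y^*_\gamma=0\}\subset\{1-\tau_\gamma\le\eta(X)\le\tau_\gamma\}$, and $Y^*_\gamma=\arg\max_i p_if_i(X)$ on $\{Y^*_\gamma\neq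 0\}$; such $Y^*_\gamma$ attains $\mathcal R(\gamma)$. *)

theory Defs
  imports "HOL-Analysis.Analysis"
begin

text \<open>Joint law of ((X,U),Y): X given Y=i has density f_i w.r.t. M, P(Y=i)=p_i,
  U uniform on [0,1] independent of (X,Y).  Labels Y in {1,2} (nat).\<close>
definition joint :: "'a measure \<Rightarrow> ('a \<Rightarrow> real) \<Rightarrow> ('a \<Rightarrow> real) \<Rightarrow> real \<Rightarrow> real
    \<Rightarrow> (('a \<times> real) \<times> nat) measure" where
  "joint M f1 f2 p1 p2 =
     density ((M \<Otimes>\<^sub>M lborel) \<Otimes>\<^sub>M count_space {1,2})
       (\<lambda>((x,u),i). ennreal (indicator {0..1} u * (if i = 1 then p1 * f1 x else p2 * f2 x)))"

definition eta :: "('a \<Rightarrow> real) \<Rightarrow> ('a \<Rightarrow> real) \<Rightarrow> real \<Rightarrow> real \<Rightarrow> 'a \<Rightarrow> real" where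
  "eta f1 f2 p1 p2 x = p1 * f1 x / (p1 * f1 x + p2 * f2 x)"

text \<open>A (randomised) classifier: measurable function of (X,U) with values in {0,1,2};
  0 means indecision.\<close>
definition is_classifier :: "'a measure \<Rightarrow> ('a \<times> real \<Rightarrow> nat) \<Rightarrow> bool" where
  "is_classifier M g \<longleftrightarrow> g \<in> measurable (M \<Otimes>\<^sub>M lborel) (count_space UNIV) \<and> (\<forall>z. g z \<in> {0,1,2})"

definition indec_prob :: "'a measure \<Rightarrow> ('a \<Rightarrow> real) \<Rightarrow> ('a \<Rightarrow> real) \<Rightarrow> real \<Rightarrow> real
    \<Rightarrow> ('a \<times> real \<Rightarrow> nat) \<Rightarrow> real" where
  "indec_prob M f1 f2 p1 p2 g =
     measure (joint M f1 f2 p1 p2) {\<omega> \<in> space (joint M f1 f2 p1 p2). g (fst \<omega>) = 0}"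

definition cond_err :: "'a measure \<Rightarrow> ('a \<Rightarrow> real) \<Rightarrow> ('a \<Rightarrow> real) \<Rightarrow> real \<Rightarrow> real
    \<Rightarrow> ('a \<times> real \<Rightarrow> nat) \<Rightarrow> real" where
  "cond_err M f1 f2 p1 p2 g =
     measure (joint M f1 f2 p1 p2) {\<omega> \<in> space (joint M f1 f2 p1 p2). g (fst \<omega>) \<noteq> snd \<omega> \<and> g (fst \<omega>) \<noteq> 0}
   / measure (joint M f1 f2 p1 p2) {\<omega> \<in> space (joint M f1 f2 p1 p2). g (fst \<omega>) \<noteq> 0}"

definition risk :: "'a measure \<Rightarrow> ('a \<Rightarrow> real) \<Rightarrow> ('a \<Rightarrow> real) \<Rightarrow> real \<Rightarrow> real \<Rightarrow> real \<Rightarrow> real" where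
  "risk M f1 f2 p1 p2 \<gamma> =
     Inf {cond_err M f1 f2 p1 p2 g | g. is_classifier M g \<and> indec_prob M f1 f2 p1 p2 g = \<gamma>}"

definition is_threshold :: "'a measure \<Rightarrow> ('a \<Rightarrow> real) \<Rightarrow> ('a \<Rightarrow> real) \<Rightarrow> real \<Rightarrow> real
    \<Rightarrow> real \<Rightarrow> real \<Rightarrow> bool" where
  "is_threshold M f1 f2 p1 p2 \<gamma> t \<longleftrightarrow> 1/2 \<le> t \<and> t \<le> 1 \<and>
     (\<exists>g. is_classifier M g \<and> indec_prob M f1 f2 p1 p2 g = \<gamma> \<and>
        (AE \<omega> in joint M f1 f2 p1 p2.
           let x = fst (fst \<omega>); e = eta f1 f2 p1 p2 x in
           ((1 - t < e \<and> e < t) \<longrightarrow> g (fst \<omega>) = 0) \<and>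
           (g (fst \<omega>) = 0 \<longrightarrow> (1 - t \<le> e \<and> e \<le> t)) \<and>
           (g (fst \<omega>) = 1 \<longrightarrow> p2 * f2 x \<le> p1 * f1 x) \<and>
           (g (fst \<omega>) = 2 \<longrightarrow> p1 * f1 x \<le> p2 * f2 x)))"

end

theory Submission imports Defs "HOL-Probability.Probability_Measure" begin

lemma joint_meas[measurable]:
  fixes f1 f2 :: "'a \<Rightarrow> real" and p1 p2 :: real
  assumes m1[measurable]: "f1 \<in> borel_measurable M" and m2[measurable]: "f2 \<in> borel_measurable M"
  shows "(\<lambda>((x,u::real),i::nat). ennreal (indicator {0..1} u * (if i = 1 then p1 * f1 x else p2 * f2 x)))
     \<in> borel_measurable ((M \<Otimes>\<^sub>M lborel) \<Otimes>\<^sub>M count_space {1,2})"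
proof -
  have e: "(\<lambda>((x,u::real),i::nat). ennreal (indicator {0..1} u * (if i = 1 then p1 * f1 x else p2 * f2 x)))
    = (\<lambda>\<omega>. if snd \<omega> = 1 then ennreal (indicator {0..1} (snd (fst \<omega>)) * (p1 * f1 (fst (fst \<omega>))))
          else ennreal (indicator {0..1} (snd (fst \<omega>)) * (p2 * f2 (fst (fst \<omega>)))))"
    by (auto simp: fun_eq_iff)
  show ?thesis unfolding e by measurable
qed

lemma joint_nn_integral:
  fixes f1 f2 :: "'a \<Rightarrow> real" and p1 p2 :: real
  assumes M: "sigma_finite_measure M" and [measurable]: "f1 \<in> borel_measurable M" "f2 \<in> borel_measurable M"
    and h[measurable]: "h \<in> borel_measurable ((M \<Otimes>\<^sub>M lborel) \<Otimes>\<^sub>M count_space {1,2})"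
  shows "(\<integral>\<^sup>+\<omega>. h \<omega> \<partial>joint M f1 f2 p1 p2) =
    (\<integral>\<^sup>+z. ennreal (indicator {0..1} (snd z) * (p1 * f1 (fst z))) * h (z,1)
          + ennreal (indicator {0..1} (snd z) * (p2 * f2 (fst z))) * h (z,2) \<partial>(M \<Otimes>\<^sub>M lborel))"
proof -
  interpret C: sigma_finite_measure "count_space {1::nat,2}"
    by (rule sigma_finite_measure_count_space_finite) simp
  have "(\<integral>\<^sup>+\<omega>. h \<omega> \<partial>joint M f1 f2 p1 p2) =
     (\<integral>\<^sup>+\<omega>. (\<lambda>((x,u::real),i::nat). ennreal (indicator {0..1} u * (if i = 1 then p1 * f1 x else p2 * f2 x))) \<omega> * h \<omega>
       \<partial>((M \<Otimes>\<^sub>M lborel) \<Otimes>\<^sub>M count_space {1,2}))"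
    unfolding joint_def by (rule nn_integral_density) measurable
  also have "\<dots> = (\<integral>\<^sup>+z. \<integral>\<^sup>+i. (\<lambda>((x,u::real),i::nat). ennreal (indicator {0..1} u * (if i = 1 then p1 * f1 x else p2 * f2 x))) (z,i) * h (z,i)
       \<partial>count_space {1,2} \<partial>(M \<Otimes>\<^sub>M lborel))"
    by (rule C.nn_integral_fst[symmetric]) measurable
  finally show ?thesis
    by (simp add: nn_integral_count_space_finite case_prod_beta)
qed

lemma joint_total:
  fixes f1 f2 :: "'a \<Rightarrow> real" and p1 p2 :: real
  assumes M: "sigma_finite_measure M" and [measurable]: "f1 \<in> borel_measurable M" "f2 \<in> borel_measurable M"
    and nn: "\<And>x. f1 x \<ge> 0" "\<And>x. f2 x \<ge> 0"
    and i1: "(\<integral>\<^sup>+ x. ennreal (f1 x) \<partial>M) = 1" and i2: "(\<integral>\<^sup>+ x. ennreal (f2 x) \<partial>M) = 1"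
    and p: "p1 > 0" "p2 > 0" "p1 + p2 = 1"
  shows "prob_space (joint M f1 f2 p1 p2)"
proof (rule prob_spaceI)
  interpret M: sigma_finite_measure M by fact
  interpret P: pair_sigma_finite M lborel
    by (simp add: M.sigma_finite_measure_axioms lborel.sigma_finite_measure_axioms pair_sigma_finite.intro)
  have "emeasure (joint M f1 f2 p1 p2) (space (joint M f1 f2 p1 p2)) = (\<integral>\<^sup>+\<omega>. 1 \<partial>joint M f1 f2 p1 p2)"
    by (simp add: nn_integral_const)
  also have "\<dots> = (\<integral>\<^sup>+z. ennreal (indicator {0..1} (snd z) * (p1 * f1 (fst z))) * 1
          + ennreal (indicator {0..1} (snd z) * (p2 * f2 (fst z))) * 1 \<partial>(M \<Otimes>\<^sub>M (lborel::real measure)))"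
    using joint_nn_integral[OF M, of f1 f2 "\<lambda>_. 1" p1 p2] by simp
  also have "\<dots> = (\<integral>\<^sup>+x. \<integral>\<^sup>+u. ennreal (indicator {0..1::real} u * (p1 * f1 x))
          + ennreal (indicator {0..1::real} u * (p2 * f2 x)) \<partial>(lborel::real measure) \<partial>M)"
    by (subst lborel.nn_integral_fst[symmetric]) (auto simp: case_prod_beta)
  also have "\<dots> = (\<integral>\<^sup>+x. ennreal (p1 * f1 x) + ennreal (p2 * f2 x) \<partial>M)"
  proof (rule nn_integral_cong)
    fix x
    have "(\<integral>\<^sup>+u. ennreal (indicator {0..1::real} u * (p1 * f1 x))
          + ennreal (indicator {0..1::real} u * (p2 * f2 x)) \<partial>lborel)
       = (\<integral>\<^sup>+u. (ennreal (p1 * f1 x) + ennreal (p2 * f2 x)) * indicator {0..1::real} u \<partial>lborel)"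
      by (rule nn_integral_cong) (auto simp: indicator_def)
    also have "\<dots> = ennreal (p1 * f1 x) + ennreal (p2 * f2 x)"
      by (subst nn_integral_cmult_indicator) auto
    finally show "(\<integral>\<^sup>+u. ennreal (indicator {0..1::real} u * (p1 * f1 x))
          + ennreal (indicator {0..1::real} u * (p2 * f2 x)) \<partial>lborel) = ennreal (p1 * f1 x) + ennreal (p2 * f2 x)" .
  qed
  also have "\<dots> = ennreal p1 * (\<integral>\<^sup>+x. ennreal (f1 x) \<partial>M) + ennreal p2 * (\<integral>\<^sup>+x. ennreal (f2 x) \<partial>M)"
    using p nn by (subst nn_integral_add) (auto simp: ennreal_mult nn_integral_cmult)
  also have "\<dots> = 1" using i1 i2 p by (simp flip: ennreal_plus)
  finally show "emeasure (joint M f1 f2 p1 p2) (space (joint M f1 f2 p1 p2)) = 1" .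
qed

lemma key_ineq:
  fixes a b t :: real
  assumes "a \<ge> 0" "b \<ge> 0" "a + b > 0" "b \<le> a" "\<not> (1 - t < a/(a+b) \<and> a/(a+b) < t)" "1/2 \<le> t"
  shows "b \<le> (1 - t) * (a + b)"
proof -
  define e where "e = a/(a+b)"
  have a: "a = e * (a+b)" and b: "b = (1 - e) * (a+b)" using assms unfolding e_def by (auto simp: field_simps)
  have "(1 - 2*e)*(a+b) = b - a" using a b by algebra
  then have "(1 - 2*e)*(a+b) \<le> 0" using assms by linarith
  then have "e \<ge> 1/2" using assms by (simp add: mult_le_0_iff)
  show ?thesis
  proof (cases "e \<ge> t")
    case True
    then have "(1 - e) * (a+b) \<le> (1 - t) * (a+b)" using assms by (intro mult_right_mono) auto
    then show ?thesis using b by simp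
  next
    case False
    then have "e \<le> 1 - t" using assms unfolding e_def by auto
    then have "e = t" using \<open>e \<ge> 1/2\<close> assms by auto
    then show ?thesis using b by simp
  qed
qed

lemma AE_base:
  fixes f1 f2 :: "'a \<Rightarrow> real" and p1 p2 :: real
  assumes M: "sigma_finite_measure M" and [measurable]: "f1 \<in> borel_measurable M" "f2 \<in> borel_measurable M"
    and ae: "AE \<omega> in joint M f1 f2 p1 p2. Q (fst \<omega>)"
  shows "AE z in M \<Otimes>\<^sub>M (lborel::real measure).
      (0 < indicator {0..1} (snd z) * (p1 * f1 (fst z)) \<or> 0 < indicator {0..1} (snd z) * (p2 * f2 (fst z))) \<longrightarrow> Q z"
proof -
  interpret M: sigma_finite_measure M by fact
  interpret P: pair_sigma_finite M lborel
    by (simp add: M.sigma_finite_measure_axioms lborel.sigma_finite_measure_axioms pair_sigma_finite.intro)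
  interpret C: sigma_finite_measure "count_space {1::nat,2}"
    by (rule sigma_finite_measure_count_space_finite) simp
  interpret PC: pair_sigma_finite "M \<Otimes>\<^sub>M (lborel::real measure)" "count_space {1::nat,2}"
    by (intro pair_sigma_finite.intro sigma_finite_pair_measure M lborel.sigma_finite_measure_axioms C.sigma_finite_measure_axioms)
  have "AE \<omega> in (M \<Otimes>\<^sub>M lborel) \<Otimes>\<^sub>M count_space {1,2}.
     0 < (\<lambda>((x,u::real),i::nat). ennreal (indicator {0..1} u * (if i = 1 then p1 * f1 x else p2 * f2 x))) \<omega> \<longrightarrow> Q (fst \<omega>)"
    using ae unfolding joint_def by (subst (asm) AE_density) measurable
  from PC.AE_pair[OF this]
  show ?thesis
  proof (rule AE_mp, intro AE_I2 impI)
    fix z :: "'a \<times> real"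
    assume "AE i in count_space {1::nat, 2}. 0 < (\<lambda>((x,u::real),i::nat). ennreal (indicator {0..1} u * (if i = 1 then p1 * f1 x else p2 * f2 x))) (z,i) \<longrightarrow> Q (fst (z,i))"
    then have h0: "\<forall>i\<in>{1::nat,2}. 0 < (\<lambda>((x,u::real),i::nat). ennreal (indicator {0..1} u * (if i = 1 then p1 * f1 x else p2 * f2 x))) (z,i) \<longrightarrow> Q (fst (z,i))"
      by (simp only: AE_count_space)
    obtain x u where z: "z = (x,u)" by (cases z)
    have h1: "0 < ennreal (indicator {0..1} u * (p1 * f1 x)) \<Longrightarrow> Q z"
      using h0 z by auto
    have h2: "0 < ennreal (indicator {0..1} u * (p2 * f2 x)) \<Longrightarrow> Q z"
      using h0 z by auto
    assume "0 < indicator {0..1} (snd z) * (p1 * f1 (fst z)) \<or> 0 < indicator {0..1} (snd z) * (p2 * f2 (fst z))"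
    then show "Q z"
    proof
      assume "0 < indicator {0..1} (snd z) * (p1 * f1 (fst z))"
      then show "Q z" using h1 z by simp
    next
      assume "0 < indicator {0..1} (snd z) * (p2 * f2 (fst z))"
      then show "Q z" using h2 z by simp
    qed
  qed
qed

lemma pt_ineq:
  fixes a b t :: real and g :: nat
  assumes "a \<ge> 0" "b \<ge> 0" "1/2 \<le> t" "t \<le> 1" "g \<in> {0,1,2}"
    and h: "a + b > 0 \<Longrightarrow> (g \<noteq> 0 \<longrightarrow> \<not> (1-t < a/(a+b) \<and> a/(a+b) < t)) \<and> (g = 1 \<longrightarrow> b \<le> a) \<and> (g = 2 \<longrightarrow> a \<le> b)"
  shows "ennreal a * (if g \<noteq> 1 \<and> g \<noteq> 0 then 1 else 0) + ennreal b * (if g \<noteq> 2 \<and> g \<noteq> 0 then 1 else 0)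
     \<le> ennreal (1-t) * (ennreal a * (if g \<noteq> 0 then 1 else 0) + ennreal b * (if g \<noteq> 0 then 1 else 0))"
proof -
  consider "g = 0" | "g = 1" | "g = 2" using assms by auto
  then show ?thesis
  proof cases
    case 1 then show ?thesis by simp
  next
    case 2
    have "b \<le> (1 - t) * (a + b)"
    proof (cases "a + b > 0")
      case True
      then show ?thesis using h[OF True] 2 assms by (intro key_ineq) auto
    next
      case False then have "a = 0" "b = 0" using assms by auto
      then show ?thesis by simp
    qed
    then have "ennreal b \<le> ennreal ((1 - t) * (a + b))" by (rule ennreal_leI)
    then show ?thesis using 2 assms by (simp add: ennreal_mult ennreal_plus[symmetric] del: ennreal_plus)
  next
    case 3
    have "a \<le> (1 - t) * (b + a)"
    proof (cases "a + b > 0")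
      case True
      have e: "b/(b+a) = 1 - a/(a+b)" using True by (simp add: field_simps)
      have n: "\<not> (1 - t < b/(b+a) \<and> b/(b+a) < t)" unfolding e using h[OF True] 3 by auto
      show ?thesis using h[OF True] 3 assms True n by (intro key_ineq) auto
    next
      case False then have "a = 0" "b = 0" using assms by auto
      then show ?thesis by simp
    qed
    then have "ennreal a \<le> ennreal ((1 - t) * (a + b))" by (simp add: add.commute ennreal_leI)
    then show ?thesis using 3 assms by (simp add: ennreal_mult ennreal_plus[symmetric] del: ennreal_plus)
  qed
qed

lemma sets_AB:
  fixes g :: "'a \<times> real \<Rightarrow> nat"
  assumes gm: "g \<in> measurable (M \<Otimes>\<^sub>M lborel) (count_space UNIV)"
  shows "{\<omega> \<in> space ((M \<Otimes>\<^sub>M (lborel::real measure)) \<Otimes>\<^sub>M count_space {1::nat,2}). g (fst \<omega>) \<noteq> snd \<omega> \<and> g (fst \<omega>) \<noteq> 0} \<in> sets ((M \<Otimes>\<^sub>M (lborel::real measure)) \<Otimes>\<^sub>M count_space {1::nat,2})"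
    "{\<omega> \<in> space ((M \<Otimes>\<^sub>M (lborel::real measure)) \<Otimes>\<^sub>M count_space {1::nat,2}). g (fst \<omega>) \<noteq> 0} \<in> sets ((M \<Otimes>\<^sub>M (lborel::real measure)) \<Otimes>\<^sub>M count_space {1::nat,2})"
proof -
  have eq: "count_space (UNIV \<times> {1::nat,2}) = count_space (UNIV::nat set) \<Otimes>\<^sub>M count_space {1::nat,2}"
    by (rule pair_measure_countable[symmetric]) auto
  have gf: "(\<lambda>\<omega>. (g (fst \<omega>), snd \<omega>)) \<in> measurable ((M \<Otimes>\<^sub>M (lborel::real measure)) \<Otimes>\<^sub>M count_space {1::nat,2}) (count_space (UNIV \<times> {1::nat,2}))"
    unfolding eq
    by (intro measurable_Pair measurable_compose[OF measurable_fst gm] measurable_snd)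
  show "{\<omega> \<in> space ((M \<Otimes>\<^sub>M (lborel::real measure)) \<Otimes>\<^sub>M count_space {1::nat,2}). g (fst \<omega>) \<noteq> snd \<omega> \<and> g (fst \<omega>) \<noteq> 0} \<in> sets ((M \<Otimes>\<^sub>M (lborel::real measure)) \<Otimes>\<^sub>M count_space {1::nat,2})"
    using measurable_sets_Collect[OF gf, of "\<lambda>(k,i). k \<noteq> i \<and> k \<noteq> 0"] by simp
  show "{\<omega> \<in> space ((M \<Otimes>\<^sub>M (lborel::real measure)) \<Otimes>\<^sub>M count_space {1::nat,2}). g (fst \<omega>) \<noteq> 0} \<in> sets ((M \<Otimes>\<^sub>M (lborel::real measure)) \<Otimes>\<^sub>M count_space {1::nat,2})"
    using measurable_sets_Collect[OF gf, of "\<lambda>(k,i). k \<noteq> 0"] by simp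
qed

lemma err_bound:
  fixes f1 f2 :: "'a \<Rightarrow> real" and p1 p2 t :: real and g :: "'a \<times> real \<Rightarrow> nat"
  assumes M: "sigma_finite_measure M" and m1[measurable]: "f1 \<in> borel_measurable M" and m2[measurable]: "f2 \<in> borel_measurable M"
    and nn: "\<And>x. f1 x \<ge> 0" "\<And>x. f2 x \<ge> 0" and p: "p1 > 0" "p2 > 0"
    and gc: "is_classifier M g" and t: "1/2 \<le> t" "t \<le> 1"
    and ae: "AE \<omega> in joint M f1 f2 p1 p2.
           let x = fst (fst \<omega>); e = eta f1 f2 p1 p2 x in
           ((1 - t < e \<and> e < t) \<longrightarrow> g (fst \<omega>) = 0) \<and>
           (g (fst \<omega>) = 0 \<longrightarrow> (1 - t \<le> e \<and> e \<le> t)) \<and>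
           (g (fst \<omega>) = 1 \<longrightarrow> p2 * f2 x \<le> p1 * f1 x) \<and>
           (g (fst \<omega>) = 2 \<longrightarrow> p1 * f1 x \<le> p2 * f2 x)"
  shows "emeasure (joint M f1 f2 p1 p2) {\<omega> \<in> space (joint M f1 f2 p1 p2). g (fst \<omega>) \<noteq> snd \<omega> \<and> g (fst \<omega>) \<noteq> 0}
    \<le> ennreal (1 - t) * emeasure (joint M f1 f2 p1 p2) {\<omega> \<in> space (joint M f1 f2 p1 p2). g (fst \<omega>) \<noteq> 0}"
proof -
  have gm[measurable]: "g \<in> measurable (M \<Otimes>\<^sub>M lborel) (count_space UNIV)"
    using gc unfolding is_classifier_def by blast
  have gv: "\<And>z. g z \<in> {0,1,2}"
    using gc unfolding is_classifier_def by blast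
  define N where "N = (M \<Otimes>\<^sub>M (lborel::real measure)) \<Otimes>\<^sub>M count_space {1::nat,2}"
  have sj: "sets (joint M f1 f2 p1 p2) = sets N"
    unfolding joint_def N_def by (rule sets_density)
  have spj: "space (joint M f1 f2 p1 p2) = space N"
    unfolding joint_def N_def by (rule space_density)
  define A where "A = {\<omega> \<in> space N. g (fst \<omega>) \<noteq> snd \<omega> \<and> g (fst \<omega>) \<noteq> 0}"
  define B where "B = {\<omega> \<in> space N. g (fst \<omega>) \<noteq> 0}"
  have Am[measurable]: "A \<in> sets N" unfolding A_def N_def by (rule sets_AB(1)[OF gm])
  have Bm[measurable]: "B \<in> sets N" unfolding B_def N_def by (rule sets_AB(2)[OF gm])
  define a where "a = (\<lambda>z::'a\<times>real. indicator {0..1} (snd z) * (p1 * f1 (fst z)))"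
  define b where "b = (\<lambda>z::'a\<times>real. indicator {0..1} (snd z) * (p2 * f2 (fst z)))"
  have a0: "a z \<ge> 0" and b0: "b z \<ge> 0" for z using nn p unfolding a_def b_def by auto
  have iA: "indicator A \<in> borel_measurable ((M \<Otimes>\<^sub>M (lborel::real measure)) \<Otimes>\<^sub>M count_space {1::nat,2})"
    using Am unfolding N_def by (rule borel_measurable_indicator)
  have "emeasure (joint M f1 f2 p1 p2) A = (\<integral>\<^sup>+\<omega>. indicator A \<omega> \<partial>joint M f1 f2 p1 p2)"
    using Am sj by simp
  also have "\<dots> = (\<integral>\<^sup>+z. ennreal (a z) * indicator A (z,1) + ennreal (b z) * indicator A (z,2) \<partial>(M \<Otimes>\<^sub>M lborel))"
    unfolding a_def b_def by (rule joint_nn_integral[OF M m1 m2 iA])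
  finally have eA: "emeasure (joint M f1 f2 p1 p2) A = (\<integral>\<^sup>+z. ennreal (a z) * indicator A (z,1) + ennreal (b z) * indicator A (z,2) \<partial>(M \<Otimes>\<^sub>M lborel))" .
  have iB: "indicator B \<in> borel_measurable ((M \<Otimes>\<^sub>M (lborel::real measure)) \<Otimes>\<^sub>M count_space {1::nat,2})"
    using Bm unfolding N_def by (rule borel_measurable_indicator)
  have "emeasure (joint M f1 f2 p1 p2) B = (\<integral>\<^sup>+\<omega>. indicator B \<omega> \<partial>joint M f1 f2 p1 p2)"
    using Bm sj by simp
  also have "\<dots> = (\<integral>\<^sup>+z. ennreal (a z) * indicator B (z,1) + ennreal (b z) * indicator B (z,2) \<partial>(M \<Otimes>\<^sub>M lborel))"
    unfolding a_def b_def by (rule joint_nn_integral[OF M m1 m2 iB])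
  finally have eB: "emeasure (joint M f1 f2 p1 p2) B = (\<integral>\<^sup>+z. ennreal (a z) * indicator B (z,1) + ennreal (b z) * indicator B (z,2) \<partial>(M \<Otimes>\<^sub>M lborel))" .
  define Q where "Q = (\<lambda>z. let x = fst z; e = eta f1 f2 p1 p2 x in
           ((1 - t < e \<and> e < t) \<longrightarrow> g z = 0) \<and>
           (g z = 0 \<longrightarrow> (1 - t \<le> e \<and> e \<le> t)) \<and>
           (g z = 1 \<longrightarrow> p2 * f2 x \<le> p1 * f1 x) \<and>
           (g z = 2 \<longrightarrow> p1 * f1 x \<le> p2 * f2 x))"
  have aeQ: "AE \<omega> in joint M f1 f2 p1 p2. Q (fst \<omega>)" using ae unfolding Q_def by simp
  have aeb: "AE z in M \<Otimes>\<^sub>M (lborel::real measure). (0 < a z \<or> 0 < b z) \<longrightarrow> Q z"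
    using AE_base[OF M m1 m2 aeQ] unfolding a_def b_def .
  have pi1: "(\<lambda>z. (z, i::nat)) \<in> measurable (M \<Otimes>\<^sub>M (lborel::real measure)) N" if "i \<in> {1,2}" for i
    unfolding N_def using that by (intro measurable_Pair measurable_ident_sets measurable_const) auto
  have mB: "(\<lambda>z. ennreal (a z) * indicator B (z,1) + ennreal (b z) * indicator B (z,2)) \<in> borel_measurable (M \<Otimes>\<^sub>M (lborel::real measure))"
  proof -
    have "(\<lambda>z. indicator B (z,i) :: ennreal) \<in> borel_measurable (M \<Otimes>\<^sub>M (lborel::real measure))" if "i \<in> {1::nat,2}" for i
      using measurable_compose[OF pi1[OF that] borel_measurable_indicator[OF Bm]] by simp
    moreover have "(\<lambda>z. ennreal (a z)) \<in> borel_measurable (M \<Otimes>\<^sub>M (lborel::real measure))"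
      "(\<lambda>z. ennreal (b z)) \<in> borel_measurable (M \<Otimes>\<^sub>M (lborel::real measure))"
      unfolding a_def b_def by measurable
    ultimately show ?thesis by (intro borel_measurable_add borel_measurable_times_ennreal) auto
  qed
  have "emeasure (joint M f1 f2 p1 p2) A \<le> (\<integral>\<^sup>+z. ennreal (1 - t) * (ennreal (a z) * indicator B (z,1) + ennreal (b z) * indicator B (z,2)) \<partial>(M \<Otimes>\<^sub>M lborel))"
    unfolding eA
  proof (rule nn_integral_mono_AE)
    show "AE z in M \<Otimes>\<^sub>M lborel. ennreal (a z) * indicator A (z, 1) + ennreal (b z) * indicator A (z, 2)
        \<le> ennreal (1 - t) * (ennreal (a z) * indicator B (z, 1) + ennreal (b z) * indicator B (z, 2))"
      using aeb
    proof (rule AE_mp, intro AE_I2 impI)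
      fix z assume z: "z \<in> space (M \<Otimes>\<^sub>M (lborel::real measure))" and q: "0 < a z \<or> 0 < b z \<longrightarrow> Q z"
      have iA1: "indicator A (z,1) = (if g z \<noteq> 1 \<and> g z \<noteq> 0 then 1 else (0::ennreal))"
        using z unfolding A_def N_def by (auto simp: indicator_def space_pair_measure)
      have iA2: "indicator A (z,2) = (if g z \<noteq> 2 \<and> g z \<noteq> 0 then 1 else (0::ennreal))"
        using z unfolding A_def N_def by (auto simp: indicator_def space_pair_measure)
      have iB1: "indicator B (z,1) = (if g z \<noteq> 0 then 1 else (0::ennreal))"
        using z unfolding B_def N_def by (auto simp: indicator_def space_pair_measure)
      have iB2: "indicator B (z,2) = (if g z \<noteq> 0 then 1 else (0::ennreal))"
        using z unfolding B_def N_def by (auto simp: indicator_def space_pair_measure)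
      have "ennreal (a z) * (if g z \<noteq> 1 \<and> g z \<noteq> 0 then 1 else 0) + ennreal (b z) * (if g z \<noteq> 2 \<and> g z \<noteq> 0 then 1 else 0)
     \<le> ennreal (1-t) * (ennreal (a z) * (if g z \<noteq> 0 then 1 else 0) + ennreal (b z) * (if g z \<noteq> 0 then 1 else 0))"
      proof (rule pt_ineq[OF a0 b0 t gv])
        assume pos: "a z + b z > 0"
        then have "0 < a z \<or> 0 < b z" using a0[of z] b0[of z] by linarith
        then have Qz: "Q z" using q by blast
        have u: "snd z \<in> {0..1}"
        proof (rule ccontr)
          assume "snd z \<notin> {0..1}"
          then have "a z = 0" "b z = 0" unfolding a_def b_def by auto
          with pos show False by simp
        qed
        then have ab: "a z = p1 * f1 (fst z)" "b z = p2 * f2 (fst z)" unfolding a_def b_def by auto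
        have et: "eta f1 f2 p1 p2 (fst z) = a z / (a z + b z)" unfolding eta_def ab ..
        show "(g z \<noteq> 0 \<longrightarrow> \<not> (1 - t < a z / (a z + b z) \<and> a z / (a z + b z) < t)) \<and>
          (g z = 1 \<longrightarrow> b z \<le> a z) \<and> (g z = 2 \<longrightarrow> a z \<le> b z)"
          using Qz unfolding Q_def Let_def et ab by auto
      qed
      then show "ennreal (a z) * indicator A (z, 1) + ennreal (b z) * indicator A (z, 2)
        \<le> ennreal (1 - t) * (ennreal (a z) * indicator B (z, 1) + ennreal (b z) * indicator B (z, 2))"
        unfolding iA1 iA2 iB1 iB2 .
    qed
  qed
  also have "\<dots> = ennreal (1 - t) * emeasure (joint M f1 f2 p1 p2) B"
    unfolding eB by (rule nn_integral_cmult[OF mB])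
  finally show ?thesis unfolding A_def B_def spj .
qed

theorem lemma1:
  fixes M :: "'a measure" and f1 f2 :: "'a \<Rightarrow> real" and p1 p2 :: real
    and \<tau> :: "real \<Rightarrow> real"
  assumes "sigma_finite_measure M"
    and "f1 \<in> borel_measurable M" and "f2 \<in> borel_measurable M"
    and "\<And>x. f1 x \<ge> 0" and "\<And>x. f2 x \<ge> 0"
    and "(\<integral>\<^sup>+ x. ennreal (f1 x) \<partial>M) = 1" and "(\<integral>\<^sup>+ x. ennreal (f2 x) \<partial>M) = 1"
    and "density M (\<lambda>x. ennreal (f1 x)) \<noteq> density M (\<lambda>x. ennreal (f2 x))"
    and "p1 > 0" and "p2 > 0" and "p1 + p2 = 1"
    and "\<And>\<epsilon>. \<epsilon> > 0 \<Longrightarrow>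
          measure (joint M f1 f2 p1 p2)
            {\<omega> \<in> space (joint M f1 f2 p1 p2).
               min (eta f1 f2 p1 p2 (fst (fst \<omega>))) (1 - eta f1 f2 p1 p2 (fst (fst \<omega>))) \<le> \<epsilon>} > 0"
    and "\<And>\<gamma>. 0 \<le> \<gamma> \<Longrightarrow> \<gamma> < 1 \<Longrightarrow> is_threshold M f1 f2 p1 p2 \<gamma> (\<tau> \<gamma>)"
  shows "(\<tau> \<longlongrightarrow> 1) (at_left 1) \<and> (risk M f1 f2 p1 p2 \<longlongrightarrow> 0) (at_left 1)"
proof -
  note M = assms(1) and m1[measurable] = assms(2) and m2[measurable] = assms(3)
  note nn = assms(4,5) and p = assms(9,10)
  note hyp = assms(12) and thr = assms(13)
  interpret J: prob_space "joint M f1 f2 p1 p2"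
    by (rule joint_total) (use assms in auto)
  have sj: "sets (joint M f1 f2 p1 p2) = sets ((M \<Otimes>\<^sub>M (lborel::real measure)) \<Otimes>\<^sub>M count_space {1::nat,2})"
    unfolding joint_def by (rule sets_density)
  have spj: "space (joint M f1 f2 p1 p2) = space ((M \<Otimes>\<^sub>M (lborel::real measure)) \<Otimes>\<^sub>M count_space {1::nat,2})"
    unfolding joint_def by (rule space_density)
  have etam: "(\<lambda>x. eta f1 f2 p1 p2 x) \<in> borel_measurable M" unfolding eta_def by measurable
  have Em[measurable]: "(\<lambda>\<omega>. eta f1 f2 p1 p2 (fst (fst \<omega>))) \<in> borel_measurable (joint M f1 f2 p1 p2)"
    by (subst measurable_cong_sets[OF sj refl]) (rule measurable_compose[OF measurable_compose[OF measurable_fst measurable_fst] etam])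
  define E where "E = (\<lambda>\<omega>::(('a \<times> real) \<times> nat). eta f1 f2 p1 p2 (fst (fst \<omega>)))"
  have Em'[measurable]: "E \<in> borel_measurable (joint M f1 f2 p1 p2)" unfolding E_def by (rule Em)
  define J where "J = joint M f1 f2 p1 p2"
  have basic: "\<exists>g. is_classifier M g \<and> measure J {\<omega> \<in> space J. g (fst \<omega>) = 0} = \<gamma> \<and>
       measure J {\<omega> \<in> space J. g (fst \<omega>) \<noteq> 0} = 1 - \<gamma> \<and>
       (AE \<omega> in J. g (fst \<omega>) = 0 \<longrightarrow> (1 - \<tau> \<gamma> \<le> E \<omega> \<and> E \<omega> \<le> \<tau> \<gamma>)) \<and>
       0 \<le> risk M f1 f2 p1 p2 \<gamma> \<and> risk M f1 f2 p1 p2 \<gamma> \<le> 1 - \<tau> \<gamma>"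
    if g0: "0 \<le> \<gamma>" and g1: "\<gamma> < 1" for \<gamma>
  proof -
    have th: "is_threshold M f1 f2 p1 p2 \<gamma> (\<tau> \<gamma>)" using thr g0 g1 .
    then have t: "1/2 \<le> \<tau> \<gamma>" "\<tau> \<gamma> \<le> 1" unfolding is_threshold_def by auto
    from th obtain g where gc: "is_classifier M g" and gi: "indec_prob M f1 f2 p1 p2 g = \<gamma>"
      and ae: "AE \<omega> in joint M f1 f2 p1 p2.
           let x = fst (fst \<omega>); e = eta f1 f2 p1 p2 x in
           ((1 - \<tau> \<gamma> < e \<and> e < \<tau> \<gamma>) \<longrightarrow> g (fst \<omega>) = 0) \<and>
           (g (fst \<omega>) = 0 \<longrightarrow> (1 - \<tau> \<gamma> \<le> e \<and> e \<le> \<tau> \<gamma>)) \<and>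
           (g (fst \<omega>) = 1 \<longrightarrow> p2 * f2 x \<le> p1 * f1 x) \<and>
           (g (fst \<omega>) = 2 \<longrightarrow> p1 * f1 x \<le> p2 * f2 x)"
      unfolding is_threshold_def by blast
    have gm: "g \<in> measurable (M \<Otimes>\<^sub>M lborel) (count_space UNIV)"
      using gc unfolding is_classifier_def by blast
    define B where "B = {\<omega> \<in> space J. g (fst \<omega>) \<noteq> 0}"
    define A where "A = {\<omega> \<in> space J. g (fst \<omega>) \<noteq> snd \<omega> \<and> g (fst \<omega>) \<noteq> 0}"
    have Bs: "B \<in> sets J" unfolding B_def J_def sj spj by (rule sets_AB(2)[OF gm])
    have Z: "{\<omega> \<in> space J. g (fst \<omega>) = 0} = space J - B" unfolding B_def by auto
    have mZ: "measure J {\<omega> \<in> space J. g (fst \<omega>) = 0} = \<gamma>"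
      using gi unfolding indec_prob_def J_def .
    have mB: "measure J B = 1 - \<gamma>"
    proof -
      have "measure J (space J - B) = \<gamma>" using mZ unfolding Z .
      then show ?thesis using J.finite_measure_compl[OF Bs[unfolded J_def]] J.prob_space unfolding J_def by simp
    qed
    have aeZ: "AE \<omega> in J. g (fst \<omega>) = 0 \<longrightarrow> (1 - \<tau> \<gamma> \<le> E \<omega> \<and> E \<omega> \<le> \<tau> \<gamma>)"
      using ae unfolding J_def E_def by (rule AE_mp) (auto simp: Let_def)
    have eb: "emeasure J A \<le> ennreal (1 - \<tau> \<gamma>) * emeasure J B"
      unfolding A_def B_def J_def by (rule err_bound[OF M m1 m2 nn p gc t ae])
    then have "ennreal (measure J A) \<le> ennreal ((1 - \<tau> \<gamma>) * measure J B)"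
      unfolding J_def J.emeasure_eq_measure using t by (simp add: ennreal_mult)
    then have mA: "measure J A \<le> (1 - \<tau> \<gamma>) * measure J B"
      using t by (subst (asm) ennreal_le_iff) auto
    have ce: "cond_err M f1 f2 p1 p2 g = measure J A / measure J B"
      unfolding cond_err_def A_def B_def J_def ..
    have ce1: "cond_err M f1 f2 p1 p2 g \<le> 1 - \<tau> \<gamma>"
      unfolding ce using mA mB g1 by (simp add: divide_le_eq)
    define S where "S = {cond_err M f1 f2 p1 p2 g | g. is_classifier M g \<and> indec_prob M f1 f2 p1 p2 g = \<gamma>}"
    have gS: "cond_err M f1 f2 p1 p2 g \<in> S" unfolding S_def using gc gi by blast
    have S0: "\<And>y. y \<in> S \<Longrightarrow> 0 \<le> y" unfolding S_def cond_err_def by auto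
    have bS: "bdd_below S" using S0 by (auto simp: bdd_below_def)
    have r: "risk M f1 f2 p1 p2 \<gamma> = Inf S" unfolding risk_def S_def ..
    have r1: "risk M f1 f2 p1 p2 \<gamma> \<le> 1 - \<tau> \<gamma>"
      unfolding r using cInf_lower[OF gS bS] ce1 by linarith
    have r0: "0 \<le> risk M f1 f2 p1 p2 \<gamma>"
      unfolding r using gS S0 by (intro cInf_greatest) auto
    show ?thesis using gc mZ mB[unfolded B_def] aeZ r0 r1 by blast
  qed
  have tle: "\<tau> \<gamma> \<le> 1" if "0 \<le> \<gamma>" "\<gamma> < 1" for \<gamma>
    using thr[OF that] unfolding is_threshold_def by auto
  have ev01: "eventually (\<lambda>x. x \<in> {0<..<1}) (at_left (1::real))"
    by (rule eventually_at_left_real) simp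
  have tau: "(\<tau> \<longlongrightarrow> 1) (at_left 1)"
  proof (rule order_tendstoI)
    fix a :: real assume "a > 1"
    show "eventually (\<lambda>x. \<tau> x < a) (at_left 1)"
      using ev01
    proof eventually_elim
      case (elim x)
      then have "\<tau> x \<le> 1" using tle[of x] by simp
      then show ?case using \<open>a > 1\<close> by linarith
    qed
  next
    fix a :: real assume a1: "a < 1"
    define D where "D = {\<omega> \<in> space J. min (E \<omega>) (1 - E \<omega>) \<le> (1 - a)/2}"
    have Ds: "D \<in> sets J" unfolding D_def J_def by measurable
    define \<delta> where "\<delta> = measure J D"
    have d0: "\<delta> > 0" unfolding \<delta>_def D_def J_def E_def using hyp[of "(1 - a)/2"] a1 by simp
    have ev: "eventually (\<lambda>x. x \<in> {max 0 (1 - \<delta>)<..<1}) (at_left (1::real))"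
      by (rule eventually_at_left_real) (use d0 in simp)
    show "eventually (\<lambda>x. a < \<tau> x) (at_left 1)"
      using ev
    proof eventually_elim
      case (elim \<gamma>)
      then have g0: "0 \<le> \<gamma>" and g1: "\<gamma> < 1" and gd: "\<gamma> > 1 - \<delta>" by auto
      show "a < \<tau> \<gamma>"
      proof (rule ccontr)
        assume "\<not> a < \<tau> \<gamma>"
        then have ta: "\<tau> \<gamma> \<le> a" by simp
        obtain g :: "'a \<times> real \<Rightarrow> nat" where mZ: "measure J {\<omega> \<in> space J. g (fst \<omega>) = 0} = \<gamma>"
          and aeZ: "AE \<omega> in J. g (fst \<omega>) = 0 \<longrightarrow> (1 - \<tau> \<gamma> \<le> E \<omega> \<and> E \<omega> \<le> \<tau> \<gamma>)"
          using basic[OF g0 g1] by blast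
        have "measure J {\<omega> \<in> space J. g (fst \<omega>) = 0} \<le> measure J (space J - D)"
          unfolding J_def
        proof (rule J.finite_measure_mono_AE)
          show "space (joint M f1 f2 p1 p2) - D \<in> sets (joint M f1 f2 p1 p2)"
            using Ds unfolding J_def by auto
          show "AE x in joint M f1 f2 p1 p2. x \<in> {\<omega> \<in> space (joint M f1 f2 p1 p2). g (fst \<omega>) = 0} \<longrightarrow> x \<in> space (joint M f1 f2 p1 p2) - D"
            using aeZ unfolding J_def
          proof (rule AE_mp, intro AE_I2 impI)
            fix \<omega> assume h: "g (fst \<omega>) = 0 \<longrightarrow> 1 - \<tau> \<gamma> \<le> E \<omega> \<and> E \<omega> \<le> \<tau> \<gamma>"
              and w: "\<omega> \<in> {\<omega> \<in> space (joint M f1 f2 p1 p2). g (fst \<omega>) = 0}"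
            then have "1 - \<tau> \<gamma> \<le> E \<omega>" "E \<omega> \<le> \<tau> \<gamma>" by auto
            then have "min (E \<omega>) (1 - E \<omega>) > (1 - a)/2" using ta a1 by auto
            then have "\<not> min (E \<omega>) (1 - E \<omega>) \<le> (1 - a)/2" by linarith
            then show "\<omega> \<in> space (joint M f1 f2 p1 p2) - D" using w unfolding D_def J_def by blast
          qed
        qed
        also have "\<dots> = 1 - \<delta>"
          unfolding \<delta>_def J_def using J.finite_measure_compl[OF Ds[unfolded J_def]] J.prob_space by simp
        finally have "\<gamma> \<le> 1 - \<delta>" using mZ by simp
        then show False using gd by simp
      qed
    qed
  qed
  have risk: "(risk M f1 f2 p1 p2 \<longlongrightarrow> 0) (at_left 1)"
  proof (rule tendsto_sandwich[of "\<lambda>_. 0" _ _ "\<lambda>x. 1 - \<tau> x"])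
    show "eventually (\<lambda>x. 0 \<le> risk M f1 f2 p1 p2 x) (at_left 1)"
      using ev01
    proof eventually_elim
      case (elim x)
      then have "0 \<le> x" "x < 1" by auto
      from basic[OF this] show ?case by blast
    qed
    show "eventually (\<lambda>x. risk M f1 f2 p1 p2 x \<le> 1 - \<tau> x) (at_left 1)"
      using ev01
    proof eventually_elim
      case (elim x)
      then have "0 \<le> x" "x < 1" by auto
      from basic[OF this] show ?case by blast
    qed
    show "((\<lambda>_. 0::real) \<longlongrightarrow> 0) (at_left 1)" by simp
    show "((\<lambda>x. 1 - \<tau> x) \<longlongrightarrow> 0) (at_left 1)"
      using tendsto_diff[OF tendsto_const[of 1] tau] by simp
  qed
  show ?thesis using tau risk by blast
qed

end
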